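(* Let $W$ be a holomorphic $d$-web of codimension one on a complex manifold $X$ of dimension $n\ge2$ which is ordinary and calibrated, with $d=c(n,k_0)$, $k_0\ge2$. Let $\sigma_1,\dots,\sigma_N$ be an adapted trivialization of $\mathcal E=R_{k_0-2}$ over an open set, write $\nabla\sigma_a=\sum_b\omega_a^b\sigma_b$ for the tautological connection and $\Omega_a^b=d\omega_a^b+\sum_c\omega_c^b\wedge\omega_a^c$ for its curvature matrix (row index $b$). Then the curvature matrix is concentrated in its last $c(n-1,k_0)=\frac{(n-2+k_0)!}{(n-2)!\,k_0!}$ rows: $\Omega_a^b=0$ for all $a$ and all $b\le N-c(n-1,k_0)$. In particular, for $n=2$ only the last row can be nonzero.
   Context: For integers $n\ge2$, $h\ge0$, put $c(n,h)=\frac{(n-1+h)!}{(n-1)!\,h!}$. Let $X$ be a complex manifold of dimension $n$ and $W$ a holomorphic $d$-web of codimension one on $X$, given by $d$ codimension-one foliations defined by nonvanishing holomorphic $1$-forms $\omega_1,\dots,\omega_d$. An abelian relation is a $d$-tuple $(f_1,\dots,f_d)$ of holomorphic functions with $\sum_if_i\omega_i=0$ and $d(f_i\omega_i)=0$ for every $i$. For $k\ge0$, $R_k$ is the set of $k$-jets at points of $X$ of $d$-tuples of functions satisfying formally the equations of abelian relations up to order $k$ (the zero-order equations $\sum_if_i\omega_i=0$ with their partial derivatives up to order $k$, and the first-order equations $d(f_i\omega_i)=0$ with their partial derivatives up to order $k-1$); there are natural projections $R_k\to R_{k'}$ for $k'\le k$. The web is calibrated: $d=c(n,k_0)$ for an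 integer $k_0\ge2$. It is ordinary (in the sense of Cavalier–Lehmann); the properties used are: for $0\le k\le k_0-2$, $R_k$ is a holomorphic vector bundle of rank $\sum_{h=1}^{k+1}(d-c(n,h))$, and the projection $R_{k_0-1}\to R_{k_0-2}$ is an isomorphism of holomorphic vector bundles. Tautological connection on $\mathcal E=R_{k_0-2}$: in local coordinates $(x_1,\dots,x_n)$, a section $s$ of $\mathcal E$ is written $(s_L)_{|L|\le k_0-2}$, $s_L$ being the component of the jet indexed by the derivation multi-index $L$; let $\hat s=(\hat s_L)_{|L|\le k_0-1}$ be the unique section of $R_{k_0-1}$ projecting onto $s$. Then $(\nabla_{\partial_i}s)_L=\partial_i(s_L)-\hat s_{L+1_i}$ for $|L|\le k_0-2$, where $L+1_i$ is $L$ with its $i$-th entry increased by $1$ (so $\hat s_{L+1_i}=s_{L+1_i}$ when $|L|\le k_0-3$). Filtration: $F_0(\mathcal E)=\mathcal E$ and $F_h(\mathcal E)=\mathrm{Ker}(R_{k_0-2}\to R_{h-1})$ for $1\le h\le k_0-1$, a subbundle of rank $\sum_{k=h+1}^{k_0-1}(d-c(n,k))$. Let $N=\sum_{h=1}^{k_0-1}(d-c(n,h))$ be the rank of $\mathcal E$. A holomorphic trivialization $(\sigma_a)_{1\le a\le N}$ of $\mathcal E$ is adapted if for every $h$ with $1\le h\le k_0-2$ the sections $\sigma_a$ with $\sum_{k=1}^h(d-c(n,k))<a\le\sum_{k=1}^{h+1}(d-c(n,k))$ span a complement of $F_{h+1}(\mathcal E)$ in $F_h(\mathcal E)$. *)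

theory Defs
  imports "HOL-Analysis.Analysis"
begin

text \<open>Local setting: the manifold is an open set X of complex^'n (local coordinates),
  n = CARD('n).  A jet of a d-tuple of
  functions is a family s i L (i < d the function index, L a derivation multi-index),
  s i L standing for the L-th partial derivative of the i-th function; entries outside
  the range (i \<ge> d or |L| > k) are 0.  A 1-form w_i is given by its coefficients
  w i j (coefficient of dx_j).\<close>

definition cnh :: "nat \<Rightarrow> nat \<Rightarrow> nat" where
  "cnh n h = fact (n - 1 + h) div (fact (n - 1) * fact h)"

definition holo :: "(complex^'n) set \<Rightarrow> (complex^'n \<Rightarrow> complex) \<Rightarrow> bool" where
  "holo U f \<longleftrightarrow> (\<forall>x\<in>U. \<exists>D. (f has_derivative D) (at x) \<and> (\<forall>c v. D (c *s v) = c * D v))"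

definition pd :: "'n \<Rightarrow> (complex^'n \<Rightarrow> complex) \<Rightarrow> complex^'n \<Rightarrow> complex" where
  "pd i f x = deriv (\<lambda>t. f (x + t *s axis i 1)) 0"

definition mabs :: "('n::finite \<Rightarrow> nat) \<Rightarrow> nat" where
  "mabs L = sum L UNIV"

definition madd1 :: "('n \<Rightarrow> nat) \<Rightarrow> 'n \<Rightarrow> ('n \<Rightarrow> nat)" where
  "madd1 L i = L(i := Suc (L i))"

definition mdiff :: "('n \<Rightarrow> nat) \<Rightarrow> ('n \<Rightarrow> nat) \<Rightarrow> ('n \<Rightarrow> nat)" where
  "mdiff M P = (\<lambda>j. M j - P j)"

definition mbinom :: "('n::finite \<Rightarrow> nat) \<Rightarrow> ('n \<Rightarrow> nat) \<Rightarrow> complex" where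
  "mbinom M P = of_nat (\<Prod>j\<in>UNIV. M j choose P j)"

primrec pdm_aux :: "nat \<Rightarrow> ('n \<Rightarrow> nat) \<Rightarrow> (complex^'n \<Rightarrow> complex) \<Rightarrow> complex^'n \<Rightarrow> complex" where
  "pdm_aux 0 L f = f"
| "pdm_aux (Suc k) L f =
     (if (\<exists>i. 0 < L i)
      then (let i = (SOME i. 0 < L i) in pd i (pdm_aux k (L(i := L i - 1)) f))
      else f)"

definition pdm :: "('n::finite \<Rightarrow> nat) \<Rightarrow> (complex^'n \<Rightarrow> complex) \<Rightarrow> complex^'n \<Rightarrow> complex" where
  "pdm L f = pdm_aux (mabs L) L f"

type_synonym 'n jet = "nat \<Rightarrow> ('n \<Rightarrow> nat) \<Rightarrow> complex"

text \<open>Integrability (omega wedge d omega = 0) of the 1-form with coefficients v.\<close>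
definition integrable_form :: "('n \<Rightarrow> complex^'n \<Rightarrow> complex) \<Rightarrow> complex^'n \<Rightarrow> bool" where
  "integrable_form v x \<longleftrightarrow> (\<forall>j l m.
      v j x * (pd l (v m) x - pd m (v l) x) + v l x * (pd m (v j) x - pd j (v m) x)
      + v m x * (pd j (v l) x - pd l (v j) x) = 0)"

text \<open>Zero-order equation sum_i f_i w_i = 0 (coefficient of dx_j), differentiated by M (Leibniz).\<close>
definition zeroeq :: "(nat \<Rightarrow> 'n::finite \<Rightarrow> complex^'n \<Rightarrow> complex) \<Rightarrow> nat \<Rightarrow> complex^'n
    \<Rightarrow> 'n jet \<Rightarrow> ('n \<Rightarrow> nat) \<Rightarrow> 'n \<Rightarrow> bool" where
  "zeroeq w d x s M j \<longleftrightarrow>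
     (\<Sum>i<d. \<Sum>P\<in>{P. P \<le> M}. mbinom M P * s i P * pdm (mdiff M P) (w i j) x) = 0"

text \<open>First-order equation d(f_i w_i) = 0 (coefficient of dx_j wedge dx_l), differentiated by M.\<close>
definition firsteq :: "(nat \<Rightarrow> 'n::finite \<Rightarrow> complex^'n \<Rightarrow> complex) \<Rightarrow> complex^'n
    \<Rightarrow> 'n jet \<Rightarrow> nat \<Rightarrow> ('n \<Rightarrow> nat) \<Rightarrow> 'n \<Rightarrow> 'n \<Rightarrow> bool" where
  "firsteq w x s i M j l \<longleftrightarrow>
     (\<Sum>P\<in>{P. P \<le> M}. mbinom M P *
        (s i (madd1 P j) * pdm (mdiff M P) (w i l) x
         + s i P * pdm (madd1 (mdiff M P) j) (w i l) x
         - s i (madd1 P l) * pdm (mdiff M P) (w i j) x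
         - s i P * pdm (madd1 (mdiff M P) l) (w i j) x)) = 0"

definition Rk :: "(nat \<Rightarrow> 'n::finite \<Rightarrow> complex^'n \<Rightarrow> complex) \<Rightarrow> nat \<Rightarrow> nat \<Rightarrow> complex^'n
    \<Rightarrow> 'n jet set" where
  "Rk w d k x = {s. (\<forall>i L. (d \<le> i \<or> k < mabs L) \<longrightarrow> s i L = 0)
       \<and> (\<forall>M j. mabs M \<le> k \<longrightarrow> zeroeq w d x s M j)
       \<and> (\<forall>i M j l. i < d \<and> Suc (mabs M) \<le> k \<longrightarrow> firsteq w x s i M j l)}"

definition trunc :: "nat \<Rightarrow> ('n::finite) jet \<Rightarrow> 'n jet" where
  "trunc k s = (\<lambda>i L. if mabs L \<le> k then s i L else 0)"

definition lincomb :: "nat set \<Rightarrow> (nat \<Rightarrow> complex) \<Rightarrow> (nat \<Rightarrow> 'n jet) \<Rightarrow> 'n jet" where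
  "lincomb A c v = (\<lambda>i L. \<Sum>a\<in>A. c a * v a i L)"

definition is_basis :: "'n jet set \<Rightarrow> nat \<Rightarrow> (nat \<Rightarrow> 'n jet) \<Rightarrow> bool" where
  "is_basis S r v \<longleftrightarrow> (\<forall>s. s \<in> S \<longleftrightarrow> (\<exists>c. s = lincomb {..<r} c v))
       \<and> (\<forall>c. lincomb {..<r} c v = (\<lambda>i L. 0) \<longrightarrow> (\<forall>a<r. c a = 0))"

definition holo_sec :: "(complex^'n) set \<Rightarrow> (complex^'n \<Rightarrow> 'n jet) \<Rightarrow> bool" where
  "holo_sec U \<sigma> \<longleftrightarrow> (\<forall>i L. holo U (\<lambda>z. \<sigma> z i L))"

text \<open>F is a holomorphic vector (sub)bundle of rank r over X: locally holomorphic frames.\<close>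
definition is_hvb :: "(complex^'n) set \<Rightarrow> (complex^'n \<Rightarrow> 'n jet set) \<Rightarrow> nat \<Rightarrow> bool" where
  "is_hvb X F r \<longleftrightarrow> (\<forall>x\<in>X. \<exists>U. open U \<and> x \<in> U \<and> U \<subseteq> X \<and>
       (\<exists>\<sigma>. (\<forall>a<r. holo_sec U (\<sigma> a)) \<and> (\<forall>y\<in>U. is_basis (F y) r (\<lambda>a. \<sigma> a y))))"

definition is_compl :: "'n jet set \<Rightarrow> 'n jet set \<Rightarrow> nat set \<Rightarrow> (nat \<Rightarrow> 'n jet) \<Rightarrow> bool" where
  "is_compl F G A v \<longleftrightarrow>
     (\<forall>s. s \<in> F \<longleftrightarrow> (\<exists>c t. t \<in> G \<and> s = (\<lambda>i L. lincomb A c v i L + t i L)))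
     \<and> (\<forall>c t. t \<in> G \<and> (\<lambda>i L. lincomb A c v i L + t i L) = (\<lambda>i L. 0) \<longrightarrow> (\<forall>a\<in>A. c a = 0))"

text \<open>Filtration F_h(E) = Ker(R_{k0-2} \<rightarrow> R_{h-1}) for h \<ge> 1.\<close>
definition Ffilt :: "(nat \<Rightarrow> 'n::finite \<Rightarrow> complex^'n \<Rightarrow> complex) \<Rightarrow> nat \<Rightarrow> nat \<Rightarrow> nat
    \<Rightarrow> complex^'n \<Rightarrow> 'n jet set" where
  "Ffilt w d k0 h x = {s \<in> Rk w d (k0 - 2) x. trunc (h - 1) s = (\<lambda>i L. 0)}"

definition lift :: "(nat \<Rightarrow> 'n::finite \<Rightarrow> complex^'n \<Rightarrow> complex) \<Rightarrow> nat \<Rightarrow> nat \<Rightarrow> complex^'n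
    \<Rightarrow> 'n jet \<Rightarrow> 'n jet" where
  "lift w d k0 y s = (THE t. t \<in> Rk w d (k0 - 1) y \<and> trunc (k0 - 2) t = s)"

text \<open>Tautological connection, covariant derivative along the i-th coordinate vector field.\<close>
definition nabla :: "(nat \<Rightarrow> 'n::finite \<Rightarrow> complex^'n \<Rightarrow> complex) \<Rightarrow> nat \<Rightarrow> nat \<Rightarrow> 'n
    \<Rightarrow> (complex^'n \<Rightarrow> 'n jet) \<Rightarrow> complex^'n \<Rightarrow> 'n jet" where
  "nabla w d k0 i \<sigma> y = (\<lambda>i' L. if i' < d \<and> mabs L \<le> k0 - 2
       then pd i (\<lambda>z. \<sigma> z i' L) y - lift w d k0 y (\<sigma> y) i' (madd1 L i) else 0)"

text \<open>Curvature Omega_a^b(d_i, d_j) = (d om_a^b + sum_c om_c^b wedge om_a^c)(d_i, d_j),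
  where om a b i y = om_a^b(d_i) at y.\<close>
definition curv :: "nat \<Rightarrow> (nat \<Rightarrow> nat \<Rightarrow> 'n \<Rightarrow> complex^'n \<Rightarrow> complex) \<Rightarrow> nat \<Rightarrow> nat
    \<Rightarrow> 'n \<Rightarrow> 'n \<Rightarrow> complex^'n \<Rightarrow> complex" where
  "curv N om a b i j y = pd i (om a b j) y - pd j (om a b i) y
      + (\<Sum>c<N. om c b i y * om a c j y - om c b j y * om a c i y)"

end

theory Submission
  imports Defs "HOL-Complex_Analysis.Complex_Analysis" "Jordan_Normal_Form.Determinant"
begin


lemma fd_prod:
  fixes f :: "'i \<Rightarrow> complex \<Rightarrow> complex"
  assumes "finite I" "\<And>i. i \<in> I \<Longrightarrow> f i field_differentiable (at t0)"
  shows "(\<lambda>t. \<Prod>i\<in>I. f i t) field_differentiable (at t0)"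
  using assms
proof (induction I rule: finite_induct)
  case empty then show ?case by (simp add: field_differentiable_const)
next
  case (insert x F)
  then show ?case by (simp add: field_differentiable_mult)
qed

lemma det_mat_fd:
  fixes e :: "nat \<Rightarrow> nat \<Rightarrow> complex \<Rightarrow> complex"
  assumes "\<And>a b. a < n \<Longrightarrow> b < n \<Longrightarrow> e a b field_differentiable (at t0)"
  shows "(\<lambda>t. Determinant.det (Matrix.mat n n (\<lambda>(a,b). e a b t))) field_differentiable (at t0)"
proof -
  have eq: "(\<lambda>t. Determinant.det (Matrix.mat n n (\<lambda>(a,b). e a b t))) =
     (\<lambda>t. \<Sum> p \<in> {p. p permutes {0..<n}}. signof p * (\<Prod> i = 0..<n. e i (p i) t))"
  proof
    fix t
    show "Determinant.det (Matrix.mat n n (\<lambda>(a,b). e a b t)) =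
       (\<Sum> p \<in> {p. p permutes {0..<n}}. signof p * (\<Prod> i = 0..<n. e i (p i) t))"
      apply (subst det_def'[of _ n])
       apply simp
      apply (rule sum.cong, simp)
      apply (rule arg_cong[where f="\<lambda>x. _ * x"])
      apply (rule prod.cong, simp)
      apply (subst index_mat)
        apply simp
       apply (simp add: permutes_in_image)
      apply simp
      done
  qed
  show ?thesis unfolding eq
    apply (rule field_differentiable_sum)
    apply (rule field_differentiable_mult[where S=UNIV, simplified])
     apply (rule field_differentiable_const)
    apply (rule fd_prod, simp)
    apply (rule assms)
     apply simp
    apply (simp add: permutes_in_image)
    done
qed

lemma mat_delete_mat:
  assumes "a < n" "b < n"
  shows "mat_delete (Matrix.mat n n f) a b =
     Matrix.mat (n - 1) (n - 1) (\<lambda>(i', j'). f (insert_index a i', insert_index b j'))"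
  apply (rule eq_matI)
  using assms by (auto simp: mat_delete_def insert_index_def)

lemma adj_entry_fd:
  fixes e :: "nat \<Rightarrow> nat \<Rightarrow> complex \<Rightarrow> complex"
  assumes "\<And>a b. a < n \<Longrightarrow> b < n \<Longrightarrow> e a b field_differentiable (at t0)"
    and "a < n" "b < n"
  shows "(\<lambda>t. adj_mat (Matrix.mat n n (\<lambda>(a,b). e a b t)) $$ (b, a)) field_differentiable (at t0)"
proof -
  have eq: "(\<lambda>t. adj_mat (Matrix.mat n n (\<lambda>(a,b). e a b t)) $$ (b, a)) =
    (\<lambda>t. (- 1) ^ (a + b) * Determinant.det (Matrix.mat (n - 1) (n - 1)
        (\<lambda>(i', j'). e (insert_index a i') (insert_index b j') t)))"
  proof
    fix t
    show "adj_mat (Matrix.mat n n (\<lambda>(a,b). e a b t)) $$ (b, a) =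
      (- 1) ^ (a + b) * Determinant.det (Matrix.mat (n - 1) (n - 1)
        (\<lambda>(i', j'). e (insert_index a i') (insert_index b j') t))"
      using assms(2,3) by (simp add: adj_mat_def cofactor_def mat_delete_mat)
  qed
  show ?thesis unfolding eq
    apply (rule field_differentiable_mult[where S=UNIV, simplified])
     apply (rule field_differentiable_const)
    apply (rule det_mat_fd)
    apply (rule assms(1))
    using assms(2,3) by (auto simp: insert_index_def)
qed

lemma cramer_fun:
  fixes G :: "nat \<Rightarrow> nat \<Rightarrow> complex" and c w :: "nat \<Rightarrow> complex"
  assumes "\<And>a. a < n \<Longrightarrow> (\<Sum>b = 0..<n. G a b * c b) = w a" and "b < n"
  shows "Determinant.det (Matrix.mat n n (\<lambda>(a,b). G a b)) * c b =
         (\<Sum>a = 0..<n. adj_mat (Matrix.mat n n (\<lambda>(a,b). G a b)) $$ (b, a) * w a)"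
proof -
  define M where "M = Matrix.mat n n (\<lambda>(a,b). G a b)"
  have M: "M \<in> carrier_mat n n" unfolding M_def by simp
  have Mc: "M *\<^sub>v vec n c = vec n w"
    by (rule eq_vecI) (auto simp: M_def scalar_prod_def assms(1) mult.commute[of "c _"])
  have "(adj_mat M * M) *\<^sub>v vec n c = adj_mat M *\<^sub>v (M *\<^sub>v vec n c)"
    by (rule assoc_mult_mat_vec[of _ n n _ n]) (auto simp: adj_mat[OF M] M)
  also have "\<dots> = adj_mat M *\<^sub>v vec n w" by (simp add: Mc)
  finally have "(Determinant.det M \<cdot>\<^sub>m 1\<^sub>m n) *\<^sub>v vec n c = adj_mat M *\<^sub>v vec n w"
    by (simp add: adj_mat[OF M])
  then have "((Determinant.det M \<cdot>\<^sub>m 1\<^sub>m n) *\<^sub>v vec n c) $ b = (adj_mat M *\<^sub>v vec n w) $ b" by simp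
  then have "(\<Sum>i = 0..<n. Determinant.det M * (if b = i then 1 else 0) * c i) =
      (\<Sum>i = 0..<n. adj_mat M $$ (b, i) * w i)"
    using assms(2) adj_mat[OF M]
    by (simp add: M_def[symmetric] scalar_prod_def row_def)
  moreover have "\<And>i. Determinant.det M * (if b = i then 1 else 0) * c i = (if b = i then Determinant.det M * c b else 0)"
    by auto
  ultimately show ?thesis using assms(2) by (simp add: M_def[symmetric])
qed

lemma gram_inj:
  fixes A :: "'p \<Rightarrow> nat \<Rightarrow> complex" and x :: "nat \<Rightarrow> complex"
  assumes P: "finite P"
    and h: "\<And>a. a < S \<Longrightarrow> (\<Sum>b = 0..<S. (\<Sum>p\<in>P. cnj (A p a) * A p b) * x b) = 0"
  shows "\<forall>p\<in>P. (\<Sum>b<S. x b * A p b) = 0"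
proof -
  define y where "y p = (\<Sum>b<S. x b * A p b)" for p
  have "0 = (\<Sum>a = 0..<S. cnj (x a) * (\<Sum>b = 0..<S. (\<Sum>p\<in>P. cnj (A p a) * A p b) * x b))"
    using h by simp
  also have "\<dots> = (\<Sum>p\<in>P. cnj (y p) * y p)"
    unfolding y_def
    by (simp add: sum_distrib_left sum_distrib_right sum.swap[of _ P] lessThan_atLeast0 mult_ac)
  also have "\<dots> = of_real (\<Sum>p\<in>P. (cmod (y p))^2)"
    unfolding of_real_sum by (rule sum.cong[OF refl]) (simp only: complex_norm_square mult.commute)
  finally have "complex_of_real (\<Sum>p\<in>P. (cmod (y p))^2) = 0" by (rule sym)
  then have "(\<Sum>p\<in>P. (cmod (y p))^2) = 0" by (simp only: of_real_eq_0_iff)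
  then have "\<forall>p\<in>P. (cmod (y p))^2 = 0"
    using P by (subst (asm) sum_nonneg_eq_0_iff) auto
  then show ?thesis by (simp add: y_def)
qed

lemma coeff_fd:
  fixes A :: "'p \<Rightarrow> nat \<Rightarrow> complex \<Rightarrow> complex" and v :: "'p \<Rightarrow> complex \<Rightarrow> complex"
    and c :: "nat \<Rightarrow> complex \<Rightarrow> complex"
  assumes P: "finite P"
    and dA: "\<And>p b. p \<in> P \<Longrightarrow> b < S \<Longrightarrow> A p b field_differentiable (at 0)"
    and dv: "\<And>p. p \<in> P \<Longrightarrow> v p field_differentiable (at 0)"
    and ev: "eventually (\<lambda>t. \<forall>p\<in>P. (\<Sum>b<S. c b t * A p b t) = v p t) (nhds 0)"
    and ind: "\<And>e. \<forall>p\<in>P. (\<Sum>b<S. e b * A p b 0) = 0 \<Longrightarrow> \<forall>b<S. e b = 0"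
    and b: "b < S"
  shows "c b field_differentiable (at 0)"
proof -
  define G where "G a b t = (\<Sum>p\<in>P. cnj (A p a 0) * A p b t)" for a b t
  define W where "W a t = (\<Sum>p\<in>P. cnj (A p a 0) * v p t)" for a t
  define D where "D t = Determinant.det (Matrix.mat S S (\<lambda>(a,b). G a b t))" for t
  define Ad where "Ad a t = adj_mat (Matrix.mat S S (\<lambda>(a,b). G a b t)) $$ (b, a)" for a t
  have dG: "G a b' field_differentiable (at 0)" if "a < S" "b' < S" for a b'
    unfolding G_def
    by (rule field_differentiable_sum, rule field_differentiable_mult[where S=UNIV, simplified],
        rule field_differentiable_const, rule dA) (use that in auto)
  have dD: "D field_differentiable (at 0)"
    unfolding D_def by (rule det_mat_fd) (rule dG)
  have dAd: "Ad a field_differentiable (at 0)" if "a < S" for a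
    unfolding Ad_def by (rule adj_entry_fd) (use dG that b in auto)
  have dW: "W a field_differentiable (at 0)" for a
    unfolding W_def
    by (rule field_differentiable_sum, rule field_differentiable_mult[where S=UNIV, simplified],
        rule field_differentiable_const, rule dv) auto
  have D0: "D 0 \<noteq> 0"
  proof
    assume "D 0 = 0"
    then obtain x where x: "x \<in> carrier_vec S" "x \<noteq> 0\<^sub>v S"
        "Matrix.mat S S (\<lambda>(a,b). G a b 0) *\<^sub>v x = 0\<^sub>v S"
      unfolding D_def using det_0_iff_vec_prod_zero[of "Matrix.mat S S (\<lambda>(a,b). G a b 0)" S]
      by auto
    have "\<And>a. a < S \<Longrightarrow> (\<Sum>b = 0..<S. (\<Sum>p\<in>P. cnj (A p a 0) * A p b 0) * x $ b) = 0"
    proof -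
      fix a assume a: "a < S"
      have "(Matrix.mat S S (\<lambda>(a,b). G a b 0) *\<^sub>v x) $ a = 0"
        using x(3) a by simp
      then show "(\<Sum>b = 0..<S. (\<Sum>p\<in>P. cnj (A p a 0) * A p b 0) * x $ b) = 0"
        using a x(1) by (simp add: scalar_prod_def G_def row_def)
    qed
    from gram_inj[OF P this] have "\<forall>p\<in>P. (\<Sum>b<S. x $ b * A p b 0) = 0" .
    from ind[OF this] have "\<forall>b<S. x $ b = 0" .
    then have "x = 0\<^sub>v S" using x(1) by (intro eq_vecI) auto
    with x(2) show False by simp
  qed
  obtain d1 where d1: "d1 > 0" "\<And>t. dist 0 t < d1 \<Longrightarrow> D t \<noteq> 0"
    using continuous_at_avoid[OF field_differentiable_imp_continuous_at[OF dD] D0] by blast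
  obtain d2 where d2: "d2 > 0" "\<And>t. dist t 0 < d2 \<Longrightarrow> \<forall>p\<in>P. (\<Sum>b<S. c b t * A p b t) = v p t"
    using ev unfolding eventually_nhds_metric by blast
  have eq: "c b t = (\<Sum>a = 0..<S. Ad a t * W a t) / D t" if "dist t 0 < min d1 d2" for t
  proof -
    have e1: "\<forall>p\<in>P. (\<Sum>b<S. c b t * A p b t) = v p t" using d2 that by auto
    have "(\<Sum>b' = 0..<S. G a b' t * c b' t) = W a t" if "a < S" for a
    proof -
      have "(\<Sum>b' = 0..<S. G a b' t * c b' t) = (\<Sum>p\<in>P. cnj (A p a 0) * (\<Sum>b<S. c b t * A p b t))"
        unfolding G_def
        by (simp add: sum_distrib_left sum_distrib_right sum.swap[of _ P] lessThan_atLeast0 mult_ac)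
      also have "\<dots> = W a t" unfolding W_def using e1 by simp
      finally show ?thesis .
    qed
    from cramer_fun[of S "\<lambda>a b. G a b t" "\<lambda>b. c b t" "\<lambda>a. W a t" b, OF this b]
    have "D t * c b t = (\<Sum>a = 0..<S. Ad a t * W a t)"
      unfolding D_def Ad_def by simp
    moreover have "D t \<noteq> 0" using d1 that by (simp add: dist_commute)
    ultimately show ?thesis by (simp add: field_simps)
  qed
  have "(\<lambda>t. (\<Sum>a = 0..<S. Ad a t * W a t) / D t) field_differentiable (at 0 within UNIV)"
    apply (rule field_differentiable_divide)
      apply (rule field_differentiable_sum)
      apply (rule field_differentiable_mult)
    using dAd dW dD D0 by auto
  then have "(\<lambda>t. (\<Sum>a = 0..<S. Ad a t * W a t) / D t) field_differentiable (at 0 within UNIV)"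
    by simp
  from field_differentiable_transform_within[OF _ _ _ this, of "min d1 d2" "c b"]
  show ?thesis using d1 d2 eq by auto
qed



lemma circ_facts:
  assumes R: "R > 0"
  shows "path_image (circlepath 0 R) = sphere 0 R"
    "continuous_on {0..1} (\<lambda>t. vector_derivative (circlepath 0 R) (at t))"
    "\<And>t. t \<in> {0..1} \<Longrightarrow> circlepath 0 R t \<in> sphere 0 R"
    "continuous_on {0..1} (circlepath 0 R)"
proof -
  show pi: "path_image (circlepath 0 R) = sphere 0 R" using R by simp
  show "continuous_on {0..1} (\<lambda>t. vector_derivative (circlepath 0 R) (at t))"
    unfolding vector_derivative_circlepath by (intro continuous_intros)
  show "\<And>t. t \<in> {0..1} \<Longrightarrow> circlepath 0 R t \<in> sphere 0 R"
    using pi unfolding path_image_def by blast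
  show "continuous_on {0..1} (circlepath 0 R)"
    using path_circlepath unfolding path_def by blast
qed

lemma param_circ_cont:
  fixes H :: "complex \<Rightarrow> complex \<Rightarrow> complex"
  assumes R: "R > 0" and cont: "continuous_on (U \<times> sphere 0 R) (\<lambda>(u,v). H u v)"
  shows "continuous_on U (\<lambda>u. contour_integral (circlepath 0 R) (H u))"
proof -
  let ?g = "circlepath 0 R"
  have eq: "contour_integral ?g (H u) = integral (cbox 0 1) (\<lambda>t. H u (?g t) * vector_derivative ?g (at t))" for u
    by (simp add: contour_integral_integral cbox_interval)
  have c1: "continuous_on (U \<times> cbox 0 1) (\<lambda>x. H (fst x) (?g (snd x)))"
  proof -
    have "continuous_on (U \<times> cbox 0 1) (\<lambda>x. (fst x, ?g (snd x)))"
      apply (intro continuous_intros)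
      apply (rule continuous_on_compose2[OF circ_facts(4)[OF R]])
        apply (intro continuous_intros)
      apply (auto simp: cbox_interval)
      done
    from continuous_on_compose2[OF cont this]
    show ?thesis using circ_facts(3)[OF R] by (force simp: cbox_interval)
  qed
  have c2: "continuous_on (U \<times> cbox 0 1) (\<lambda>x. vector_derivative ?g (at (snd x)))"
    by (rule continuous_on_compose2[OF circ_facts(2)[OF R]]) (auto intro!: continuous_intros simp: cbox_interval)
  have "continuous_on (U \<times> cbox 0 1) (\<lambda>(u, t). H u (?g t) * vector_derivative ?g (at t))"
    using continuous_on_mult[OF c1 c2] by (simp add: split_beta)
  from integral_continuous_on_param[OF this] show ?thesis unfolding eq .
qed

lemma two_var:
  fixes F :: "complex \<Rightarrow> complex \<Rightarrow> complex" and R :: real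
  assumes R: "R > 0"
    and cont: "continuous_on (cball 0 (2*R) \<times> cball 0 (2*R)) (\<lambda>(u,v). F u v)"
    and holu: "\<And>v. v \<in> cball 0 (2*R) \<Longrightarrow> (\<lambda>u. F u v) holomorphic_on ball 0 (2*R)"
    and holv: "\<And>u. u \<in> cball 0 (2*R) \<Longrightarrow> F u holomorphic_on ball 0 (2*R)"
  shows "((\<lambda>u. deriv (F u) 0) has_field_derivative
     contour_integral (circlepath 0 R) (\<lambda>z. contour_integral (circlepath 0 R)
        (\<lambda>e. F z e / (e^2 * (2 * of_real pi * \<i>)^2)) / z^2)) (at 0)"
proof -
  define g where "g = circlepath 0 R"
  define c :: complex where "c = 2 * of_real pi * \<i>"
  have c0: "c \<noteq> 0" by (simp add: c_def)
  have pig: "path_image g = sphere 0 R" unfolding g_def using R by simp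
  have vpg: "valid_path g" unfolding g_def by simp
  have vdg: "continuous_on {0..1} (\<lambda>t. vector_derivative g (at t))"
    unfolding g_def using circ_facts(2)[OF R] .
  have sb: "sphere 0 R \<subseteq> cball (0::complex) (2*R)" "cball 0 R \<subseteq> cball (0::complex) (2*R)"
     "ball 0 R \<subseteq> cball (0::complex) (2*R)"
    "ball (0::complex) R \<subseteq> ball 0 (2*R)" "sphere (0::complex) R \<subseteq> ball 0 (2*R)"
    using R by auto
  have contS: "continuous_on (A \<times> B) (\<lambda>(u,v). F u v)"
    if "A \<subseteq> cball 0 (2*R)" "B \<subseteq> cball 0 (2*R)" for A B
    by (rule continuous_on_subset[OF cont]) (use that in auto)
  have cont1: "continuous_on B (F u)" if "u \<in> cball 0 (2*R)" "B \<subseteq> cball 0 (2*R)" for u B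
  proof -
    have "continuous_on B (\<lambda>v. (u, v))" by (intro continuous_intros)
    moreover have "(\<lambda>v. (u, v)) ` B \<subseteq> cball 0 (2*R) \<times> cball 0 (2*R)" using that by (auto simp: mem_Times_iff)
    ultimately show ?thesis using continuous_on_compose2[OF cont] by fastforce
  qed
  have cont2: "continuous_on B (\<lambda>u. F u v)" if "v \<in> cball 0 (2*R)" "B \<subseteq> cball 0 (2*R)" for v B
  proof -
    have "continuous_on B (\<lambda>u. (u, v))" by (intro continuous_intros)
    moreover have "(\<lambda>u. (u, v)) ` B \<subseteq> cball 0 (2*R) \<times> cball 0 (2*R)" using that by (auto simp: mem_Times_iff)
    ultimately show ?thesis using continuous_on_compose2[OF cont] by fastforce
  qed
  define \<Phi> where "\<Phi> z = contour_integral g (\<lambda>e. F z e / (e^2 * c^2))" for z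
  define Q where "Q u z e = F z e / ((z - u) * e^2 * c^2)" for u z e
  have nz: "e \<noteq> 0" if "e \<in> sphere 0 R" for e :: complex using that R by auto
  have s1: "deriv (F u) 0 = contour_integral g (\<lambda>e. F u e / e^2) / c" if u: "u \<in> ball 0 R" for u
  proof -
    have "(F u has_field_derivative (1 / c * contour_integral g (\<lambda>e. F u e / (e - 0)^2))) (at 0)"
      unfolding g_def c_def
      apply (rule Cauchy_derivative_integral_circlepath(2))
        apply (rule cont1) using u sb apply auto[2]
       apply (rule holomorphic_on_subset[OF holv]) using u sb R by auto
    then show ?thesis by (simp add: DERIV_imp_deriv)
  qed
  have s2: "((\<lambda>z. F z e / (z - u)) has_contour_integral (c * F u e)) g"
    if u: "u \<in> ball 0 R" and e: "e \<in> sphere 0 R" for u e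
    unfolding g_def c_def
    apply (rule Cauchy_integral_circlepath)
      apply (rule cont2) using e sb apply auto[2]
     apply (rule holomorphic_on_subset[OF holu]) using e sb R apply auto[2]
    using u by simp
  have s3: "deriv (F u) 0 = contour_integral g (\<lambda>z. \<Phi> z / (z - u))" if u: "u \<in> ball 0 R" for u
  proof -
    have uns: "z - u \<noteq> 0" if "z \<in> sphere 0 R" for z using that u by auto
    have inner: "contour_integral g (\<lambda>z. Q u z e) = F u e / (e^2 * c)" if e: "e \<in> sphere 0 R" for e
    proof -
      have "contour_integral g (\<lambda>z. Q u z e) = contour_integral g (\<lambda>z. F z e / (z - u) / (e^2 * c^2))"
        by (rule contour_integral_cong) (auto simp: Q_def field_simps)
      also have "\<dots> = contour_integral g (\<lambda>z. F z e / (z - u)) / (e^2 * c^2)"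
        by (rule contour_integral_div) (use s2[OF u e] in \<open>auto simp: contour_integrable_on_def\<close>)
      also have "\<dots> = c * F u e / (e^2 * c^2)"
        using contour_integral_unique[OF s2[OF u e]] by simp
      also have "\<dots> = F u e / (e^2 * c)" using c0 by (simp add: field_simps power2_eq_square)
      finally show ?thesis .
    qed
    have intF: "(\<lambda>e. F u e / e^2) contour_integrable_on g"
      unfolding g_def
      apply (rule contour_integrable_continuous_circlepath)
      apply (rule continuous_on_divide)
        apply (rule cont1) using u sb R apply auto[2]
       apply (intro continuous_intros)
      using R by auto
    have "deriv (F u) 0 = contour_integral g (\<lambda>e. F u e / e^2 / c)"
      using s1[OF u] contour_integral_div[OF intF, of c] by simp
    also have "\<dots> = contour_integral g (\<lambda>e. contour_integral g (\<lambda>z. Q u z e))"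
      by (rule contour_integral_cong) (use inner pig in \<open>auto simp: field_simps\<close>)
    also have "\<dots> = contour_integral g (\<lambda>z. contour_integral g (\<lambda>e. Q u z e))"
    proof (rule contour_integral_swap[OF _ vpg vpg vdg vdg])
      have "continuous_on (sphere 0 R \<times> sphere 0 R) (\<lambda>x. F (snd x) (fst x) / ((snd x - u) * (fst x)^2 * c^2))"
      proof (intro continuous_intros)
        have "continuous_on (sphere 0 R \<times> sphere 0 R) (\<lambda>x. (snd x, fst x))" by (intro continuous_intros)
        from continuous_on_compose2[OF contS[OF sb(1) sb(1)] this]
        moreover have "(\<lambda>x. (snd x, fst x)) ` (sphere 0 R \<times> sphere 0 R) \<subseteq> sphere 0 R \<times> sphere 0 R"
          by (auto simp: mem_Times_iff)
        ultimately show "continuous_on (sphere 0 R \<times> sphere 0 R) (\<lambda>x. F (snd x) (fst x))" by auto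
      qed (use uns nz in \<open>auto simp: c0 mem_Times_iff\<close>)
      then show "continuous_on (path_image g \<times> path_image g) (\<lambda>(y1, y2). Q u y2 y1)"
        unfolding pig Q_def by (simp add: split_beta)
    qed
    also have "\<dots> = contour_integral g (\<lambda>z. \<Phi> z / (z - u))"
    proof (rule contour_integral_cong[OF refl])
      fix z assume z: "z \<in> path_image g"
      have intz: "(\<lambda>e. F z e / (e^2 * c^2)) contour_integrable_on g"
        unfolding g_def
        apply (rule contour_integrable_continuous_circlepath)
        apply (rule continuous_on_divide)
          apply (rule cont1) using z pig sb R apply auto[2]
         apply (intro continuous_intros)
        using R c0 by auto
      have "contour_integral g (\<lambda>e. Q u z e) = contour_integral g (\<lambda>e. F z e / (e^2 * c^2) / (z - u))"
        by (rule contour_integral_cong) (auto simp: Q_def field_simps)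
      also have "\<dots> = \<Phi> z / (z - u)"
        unfolding \<Phi>_def by (rule contour_integral_div[OF intz])
      finally show "contour_integral g (\<lambda>e. Q u z e) = \<Phi> z / (z - u)" .
    qed
    finally show ?thesis .
  qed
  have cPhi: "continuous_on (sphere 0 R) \<Phi>"
    unfolding \<Phi>_def g_def
  proof (rule param_circ_cont[OF R])
    have "continuous_on (sphere 0 R \<times> sphere 0 R) (\<lambda>x. F (fst x) (snd x) / ((snd x)^2 * c^2))"
    proof (intro continuous_intros)
      show "continuous_on (sphere 0 R \<times> sphere 0 R) (\<lambda>x. F (fst x) (snd x))"
        using contS[OF sb(1) sb(1)] by (simp add: split_beta)
    qed (use nz in \<open>auto simp: c0 mem_Times_iff\<close>)
    then show "continuous_on (sphere 0 R \<times> sphere 0 R) (\<lambda>(u, v). F u v / (v^2 * c^2))"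
      by (simp add: split_beta)
  qed
  have int5: "((\<lambda>z. \<Phi> z / (z - w)^1) has_contour_integral deriv (F w) 0) (circlepath 0 R)"
    if w: "w \<in> ball 0 R" for w
  proof -
    have "(\<lambda>z. \<Phi> z / (z - w)) contour_integrable_on (circlepath 0 R)"
      apply (rule contour_integrable_continuous_circlepath)
      apply (rule continuous_on_divide)
      using cPhi R apply simp
       apply (intro continuous_intros)
      using w R by auto
    from has_contour_integral_integral[OF this] show ?thesis
      using s3[OF w] by (simp add: g_def)
  qed
  have "((\<lambda>u. deriv (F u) 0) has_field_derivative
      (of_nat 1 * contour_integral (circlepath 0 R) (\<lambda>z. \<Phi> z / (z - 0)^(Suc 1)))) (at 0)"
    apply (rule Cauchy_next_derivative_circlepath(2)[where f=\<Phi> and z=0 and r=R and k=1])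
    using cPhi R int5 by auto
  then show ?thesis by (simp add: \<Phi>_def g_def c_def power2_eq_square)
qed

lemma two_var_sym:
  fixes F :: "complex \<Rightarrow> complex \<Rightarrow> complex" and R :: real
  assumes R: "R > 0"
    and cont: "continuous_on (cball 0 (2*R) \<times> cball 0 (2*R)) (\<lambda>(u,v). F u v)"
    and holu: "\<And>v. v \<in> cball 0 (2*R) \<Longrightarrow> (\<lambda>u. F u v) holomorphic_on ball 0 (2*R)"
    and holv: "\<And>u. u \<in> cball 0 (2*R) \<Longrightarrow> F u holomorphic_on ball 0 (2*R)"
  shows "\<exists>K. ((\<lambda>u. deriv (F u) 0) has_field_derivative K) (at 0)
           \<and> ((\<lambda>v. deriv (\<lambda>u. F u v) 0) has_field_derivative K) (at 0)"
proof -
  define g where "g = circlepath 0 R"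
  define c :: complex where "c = 2 * of_real pi * \<i>"
  have c0: "c \<noteq> 0" by (simp add: c_def)
  have pig: "path_image g = sphere 0 R" unfolding g_def using R by simp
  have vpg: "valid_path g" unfolding g_def by simp
  have vdg: "continuous_on {0..1} (\<lambda>t. vector_derivative g (at t))"
    unfolding g_def using circ_facts(2)[OF R] .
  have nz: "e \<noteq> 0" if "e \<in> sphere 0 R" for e :: complex using that R by auto
  have sb: "sphere 0 R \<subseteq> cball (0::complex) (2*R)" using R by auto
  have cS: "continuous_on (sphere 0 R \<times> sphere 0 R) (\<lambda>(u,v). F u v)"
    by (rule continuous_on_subset[OF cont]) (use sb in auto)
  have cS': "continuous_on (sphere 0 R \<times> sphere 0 R) (\<lambda>x. F (snd x) (fst x))"
  proof -
    have "continuous_on (sphere 0 R \<times> sphere 0 R) (\<lambda>x. (snd x, fst x))" by (intro continuous_intros)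
    moreover have "(\<lambda>x. (snd x, fst x)) ` (sphere 0 R \<times> sphere 0 R) \<subseteq> sphere 0 R \<times> sphere 0 R"
      by (auto simp: mem_Times_iff)
    ultimately show ?thesis using continuous_on_compose2[OF cS, of _ "\<lambda>x. (snd x, fst x)"] by simp
  qed
  have A: "((\<lambda>u. deriv (F u) 0) has_field_derivative
     contour_integral g (\<lambda>z. contour_integral g (\<lambda>e. F z e / (e^2 * c^2)) / z^2)) (at 0)"
    unfolding g_def c_def by (rule two_var[OF R cont holu holv])
  have cont': "continuous_on (cball 0 (2*R) \<times> cball 0 (2*R)) (\<lambda>(u,v). F v u)"
  proof -
    have "continuous_on (cball 0 (2*R) \<times> cball 0 (2*R)) (\<lambda>x::complex\<times>complex. (snd x, fst x))" by (intro continuous_intros)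
    moreover have "(\<lambda>x. (snd x, fst x)) ` (cball 0 (2*R) \<times> cball 0 (2*R)) \<subseteq> cball (0::complex) (2*R) \<times> cball 0 (2*R)"
      by (auto simp: mem_Times_iff)
    ultimately show ?thesis using continuous_on_compose2[OF cont, of _ "\<lambda>x. (snd x, fst x)"] by (simp add: split_beta)
  qed
  have B: "((\<lambda>v. deriv (\<lambda>u. F u v) 0) has_field_derivative
     contour_integral g (\<lambda>z. contour_integral g (\<lambda>e. F e z / (e^2 * c^2)) / z^2)) (at 0)"
    unfolding g_def c_def
    by (rule two_var[OF R cont']) (use holu holv in auto)
  have inA: "(\<lambda>e. h e) contour_integrable_on g" if "continuous_on (sphere 0 R) h" for h
    unfolding g_def by (rule contour_integrable_continuous_circlepath) (use that R in simp)
  have cA: "continuous_on (sphere 0 R) (\<lambda>e. F z e / (e^2 * c^2))" if "z \<in> sphere 0 R" for z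
  proof -
    have "continuous_on (sphere 0 R) (\<lambda>e. (z, e))" by (intro continuous_intros)
    moreover have "(\<lambda>e. (z, e)) ` sphere 0 R \<subseteq> sphere 0 R \<times> sphere 0 R" using that by (auto simp: mem_Times_iff)
    ultimately have "continuous_on (sphere 0 R) (F z)"
      using continuous_on_compose2[OF cS, of "sphere 0 R" "\<lambda>e. (z,e)"] by simp
    then show ?thesis by (intro continuous_intros) (use nz c0 in auto)
  qed
  have cB: "continuous_on (sphere 0 R) (\<lambda>e. F e z / (e^2 * c^2))" if "z \<in> sphere 0 R" for z
  proof -
    have "continuous_on (sphere 0 R) (\<lambda>e. (e, z))" by (intro continuous_intros)
    moreover have "(\<lambda>e. (e, z)) ` sphere 0 R \<subseteq> sphere 0 R \<times> sphere 0 R" using that by (auto simp: mem_Times_iff)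
    ultimately have "continuous_on (sphere 0 R) (\<lambda>e. F e z)"
      using continuous_on_compose2[OF cS, of "sphere 0 R" "\<lambda>e. (e,z)"] by simp
    then show ?thesis by (intro continuous_intros) (use nz c0 in auto)
  qed
  have "contour_integral g (\<lambda>z. contour_integral g (\<lambda>e. F z e / (e^2 * c^2)) / z^2)
      = contour_integral g (\<lambda>z. contour_integral g (\<lambda>e. F z e / (e^2 * c^2) / z^2))"
    by (rule contour_integral_cong[OF refl], rule contour_integral_div[symmetric], rule inA, rule cA)
       (simp add: pig)
  also have "\<dots> = contour_integral g (\<lambda>e. contour_integral g (\<lambda>z. F z e / (e^2 * c^2) / z^2))"
  proof (rule contour_integral_swap[OF _ vpg vpg vdg vdg])
    have "continuous_on (sphere 0 R \<times> sphere 0 R) (\<lambda>x. F (fst x) (snd x) / ((snd x)^2 * c^2) / (fst x)^2)"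
      by (intro continuous_intros) (use cS nz c0 in \<open>auto simp: split_beta mem_Times_iff\<close>)
    then show "continuous_on (path_image g \<times> path_image g) (\<lambda>(y1, y2). F y1 y2 / (y2^2 * c^2) / y1^2)"
      by (simp add: pig split_beta)
  qed
  also have "\<dots> = contour_integral g (\<lambda>e. contour_integral g (\<lambda>z. F z e / (z^2 * c^2)) / e^2)"
  proof (rule contour_integral_cong[OF refl])
    fix e assume e: "e \<in> path_image g"
    have "contour_integral g (\<lambda>z. F z e / (e^2 * c^2) / z^2) = contour_integral g (\<lambda>z. F z e / (z^2 * c^2) / e^2)"
      by (rule contour_integral_cong[OF refl]) (simp add: field_simps)
    also have "\<dots> = contour_integral g (\<lambda>z. F z e / (z^2 * c^2)) / e^2"
      by (rule contour_integral_div, rule inA, rule cB) (use e pig in simp)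
    finally show "contour_integral g (\<lambda>z. F z e / (e^2 * c^2) / z^2) = contour_integral g (\<lambda>z. F z e / (z^2 * c^2)) / e^2" .
  qed
  finally show ?thesis using A B by auto
qed

lemma norm_smult_vec: "norm (u *s (a::complex^'n)) = cmod u * norm a"
  unfolding norm_vec_def by (simp add: norm_mult L2_set_right_distrib)

lemma norm_axis_c: "norm (axis i (1::complex) :: complex^'n) = 1"
proof -
  have "norm (axis i (1::complex) :: complex^'n) = L2_set (\<lambda>k. if k = i then 1 else 0) UNIV"
    unfolding norm_vec_def axis_def by (simp add: if_distrib cong: if_cong)
  also have "\<dots> = 1" unfolding L2_set_def
    by (simp add: if_distrib[where f="\<lambda>x. x^2"] sum.delta cong: if_cong)
  finally show ?thesis .
qed

lemma bl_smult: "bounded_linear (\<lambda>u::complex. u *s (a::complex^'n))"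
proof (rule bounded_linear_intro[where K="norm a"])
  show "(x + y) *s a = x *s a + y *s a" for x y by (simp add: vector_sadd_rdistrib)
  show "(r *\<^sub>R x) *s a = r *\<^sub>R (x *s a)" for r x
    by (simp add: Finite_Cartesian_Product.vec_eq_iff)
  show "norm (x *s a) \<le> norm x * norm a" for x by (simp add: norm_smult_vec)
qed

lemma holo_line:
  fixes f :: "complex^'n \<Rightarrow> complex"
  assumes hf: "holo V f" and inV: "p + t0 *s a \<in> V"
  shows "\<exists>D. ((\<lambda>t. f (p + t *s a)) has_field_derivative D) (at t0)"
proof -
  obtain D where D: "(f has_derivative D) (at (p + t0 *s a))" and lin: "\<forall>c v. D (c *s v) = c * D v"
    using hf inV unfolding holo_def by blast
  have g: "((\<lambda>t. p + t *s a) has_derivative (\<lambda>h. 0 + h *s a)) (at t0)"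
    by (intro has_derivative_add has_derivative_const bounded_linear.has_derivative[OF bl_smult has_derivative_ident])
  from has_derivative_compose[OF g D]
  have "((\<lambda>t. f (p + t *s a)) has_derivative (\<lambda>h. D (0 + h *s a))) (at t0)" by simp
  moreover have "(\<lambda>h. D (0 + h *s a)) = (*) (D a)" using lin by (auto simp: mult.commute)
  ultimately show ?thesis unfolding has_field_derivative_def by auto
qed

lemma holo_cont: "holo V f \<Longrightarrow> continuous_on V f"
  unfolding holo_def
  by (meson continuous_at_imp_continuous_on has_derivative_continuous)

lemma holo_mixed:
  fixes f :: "complex^'n \<Rightarrow> complex"
  assumes hf: "holo V f" and V: "open V" and y: "y \<in> V"
  shows "\<exists>K. ((\<lambda>t. pd j f (y + t *s axis i 1)) has_field_derivative K) (at 0)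
           \<and> ((\<lambda>t. pd i f (y + t *s axis j 1)) has_field_derivative K) (at 0)"
proof -
  define a :: "complex^'n" where "a = axis i 1"
  define b :: "complex^'n" where "b = axis j 1"
  obtain e where e: "e > 0" "ball y e \<subseteq> V" using V y open_contains_ball by blast
  define R where "R = e / 5"
  have R: "R > 0" using e by (simp add: R_def)
  define F where "F u v = f (y + u *s a + v *s b)" for u v
  have inV: "y + u *s a + v *s b \<in> V" if "cmod u \<le> 2*R" "cmod v \<le> 2*R" for u v
  proof -
    have "norm (u *s a + v *s b) \<le> norm (u *s a) + norm (v *s b)" by (rule norm_triangle_ineq)
    also have "\<dots> = cmod u + cmod v" by (simp add: norm_smult_vec a_def b_def norm_axis_c)
    also have "\<dots> < e" using that e by (simp add: R_def)
    finally have "norm (u *s a + v *s b) < e" .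
    then have "dist y (y + u *s a + v *s b) < e"
      by (metis add.assoc add_diff_cancel_left' dist_commute dist_norm)
    then show ?thesis using e by auto
  qed
  have cont: "continuous_on (cball 0 (2*R) \<times> cball 0 (2*R)) (\<lambda>(u,v). F u v)"
  proof -
    have "continuous_on (cball 0 (2*R) \<times> cball 0 (2*R)) (\<lambda>x::complex\<times>complex. y + fst x *s a + snd x *s b)"
      by (intro continuous_intros bounded_linear.continuous_on[OF bl_smult])
    moreover have "(\<lambda>x::complex\<times>complex. y + fst x *s a + snd x *s b) ` (cball 0 (2*R) \<times> cball 0 (2*R)) \<subseteq> V"
      using inV by (auto simp: mem_Times_iff)
    ultimately show ?thesis
      using continuous_on_compose2[OF holo_cont[OF hf]] by (simp add: F_def split_beta)
  qed
  have holu: "(\<lambda>u. F u v) holomorphic_on ball 0 (2*R)" if "v \<in> cball 0 (2*R)" for v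
    unfolding holomorphic_on_def field_differentiable_def
  proof
    fix u :: complex assume u: "u \<in> ball 0 (2*R)"
    have "(y + v *s b) + u *s a \<in> V" using inV[of u v] u that by (simp add: add_ac)
    from holo_line[OF hf this] obtain D where "((\<lambda>t. f (y + v *s b + t *s a)) has_field_derivative D) (at u)" by blast
    then have "((\<lambda>t. F t v) has_field_derivative D) (at u)" by (simp add: F_def add_ac)
    then show "\<exists>D. ((\<lambda>u. F u v) has_field_derivative D) (at u within ball 0 (2*R))"
      using has_field_derivative_at_within by blast
  qed
  have holv: "F u holomorphic_on ball 0 (2*R)" if "u \<in> cball 0 (2*R)" for u
    unfolding holomorphic_on_def field_differentiable_def
  proof
    fix v :: complex assume v: "v \<in> ball 0 (2*R)"
    have "(y + u *s a) + v *s b \<in> V" using inV[of u v] v that by simp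
    from holo_line[OF hf this] obtain D where "((\<lambda>t. f (y + u *s a + t *s b)) has_field_derivative D) (at v)" by blast
    then have "(F u has_field_derivative D) (at v)" by (simp add: F_def[abs_def])
    then show "\<exists>D. (F u has_field_derivative D) (at v within ball 0 (2*R))"
      using has_field_derivative_at_within by blast
  qed
  obtain K where K1: "((\<lambda>u. deriv (F u) 0) has_field_derivative K) (at 0)"
      and K2: "((\<lambda>v. deriv (\<lambda>u. F u v) 0) has_field_derivative K) (at 0)"
    using two_var_sym[OF R cont holu holv] by blast
  have e1: "(\<lambda>t. pd j f (y + t *s axis i 1)) = (\<lambda>u. deriv (F u) 0)"
    by (simp add: pd_def F_def[abs_def] a_def b_def)
  have e2: "(\<lambda>t. pd i f (y + t *s axis j 1)) = (\<lambda>v. deriv (\<lambda>u. F u v) 0)"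
    by (simp add: pd_def F_def[abs_def] a_def b_def add_ac)
  show ?thesis using K1 K2 unfolding e1 e2 by blast
qed



definition ldiff :: "'n \<Rightarrow> (complex^'n \<Rightarrow> complex) \<Rightarrow> complex^'n \<Rightarrow> bool" where
  "ldiff i \<phi> y \<longleftrightarrow> (\<lambda>t. \<phi> (y + t *s axis i 1)) field_differentiable (at 0)"

lemma ev_line:
  fixes a :: "complex^'n"
  assumes "open V" "y \<in> V"
  shows "eventually (\<lambda>t. y + t *s a \<in> V) (nhds 0)"
proof -
  obtain e where e: "e > 0" "ball y e \<subseteq> V" using assms open_contains_ball by blast
  show ?thesis unfolding eventually_nhds_metric
  proof (intro exI conjI allI impI)
    show "e / (norm a + 1) > 0" using e by (intro divide_pos_pos) (auto intro: add_nonneg_pos)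
    fix t :: complex assume t: "dist t 0 < e / (norm a + 1)"
    have "norm (t *s a) = cmod t * norm a" by (rule norm_smult_vec)
    also have "\<dots> \<le> cmod t * (norm a + 1)" by (simp add: mult_left_mono)
    also have "\<dots> < e" using t by (simp add: field_simps add_pos_nonneg)
    finally have "dist y (y + t *s a) < e" by (simp add: dist_norm)
    then show "y + t *s a \<in> V" using e by auto
  qed
qed

lemma pd_cong:
  assumes "open V" "y \<in> V" "\<And>z. z \<in> V \<Longrightarrow> \<phi> z = \<psi> z"
  shows "pd i \<phi> y = pd i \<psi> y"
  unfolding pd_def
  by (rule deriv_cong_ev[OF eventually_mono[OF ev_line[OF assms(1,2)]]]) (use assms(3) in auto)

lemma pd_zero:
  assumes "open V" "y \<in> V" "\<And>z. z \<in> V \<Longrightarrow> \<phi> z = 0"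
  shows "pd i \<phi> y = 0"
proof -
  have "pd i \<phi> y = pd i (\<lambda>z. 0) y" by (rule pd_cong[OF assms])
  then show ?thesis by (simp add: pd_def)
qed

lemma pd_deriv: "ldiff i \<phi> y \<Longrightarrow> ((\<lambda>t. \<phi> (y + t *s axis i 1)) has_field_derivative pd i \<phi> y) (at 0)"
  unfolding ldiff_def pd_def by (rule field_differentiable_derivI)

lemma pd_mult:
  assumes "ldiff i \<phi> y" "ldiff i \<psi> y"
  shows "pd i (\<lambda>z. \<phi> z * \<psi> z) y = pd i \<phi> y * \<psi> y + \<phi> y * pd i \<psi> y"
proof -
  from DERIV_mult[OF pd_deriv[OF assms(1)] pd_deriv[OF assms(2)]]
  have "((\<lambda>t. \<phi> (y + t *s axis i 1) * \<psi> (y + t *s axis i 1)) has_field_derivative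
     pd i \<phi> y * \<psi> y + pd i \<psi> y * \<phi> y) (at 0)" by simp
  then show ?thesis unfolding pd_def[of i "\<lambda>z. \<phi> z * \<psi> z"]
    by (simp add: DERIV_imp_deriv mult.commute)
qed

lemma pd_add:
  assumes "ldiff i \<phi> y" "ldiff i \<psi> y"
  shows "pd i (\<lambda>z. \<phi> z + \<psi> z) y = pd i \<phi> y + pd i \<psi> y"
proof -
  from DERIV_add[OF pd_deriv[OF assms(1)] pd_deriv[OF assms(2)]]
  show ?thesis unfolding pd_def[of i "\<lambda>z. \<phi> z + \<psi> z"] by (simp add: DERIV_imp_deriv)
qed

lemma pd_sum:
  assumes "\<And>b. b \<in> I \<Longrightarrow> ldiff i (\<phi> b) y"
  shows "pd i (\<lambda>z. \<Sum>b\<in>I. \<phi> b z) y = (\<Sum>b\<in>I. pd i (\<phi> b) y)"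
proof -
  have "((\<lambda>t. \<Sum>b\<in>I. \<phi> b (y + t *s axis i 1)) has_field_derivative (\<Sum>b\<in>I. pd i (\<phi> b) y)) (at 0)"
    by (rule DERIV_sum) (rule pd_deriv[OF assms])
  then show ?thesis unfolding pd_def[of i "\<lambda>z. \<Sum>b\<in>I. \<phi> b z"] by (simp add: DERIV_imp_deriv)
qed

lemma ldiff_mult: "ldiff i \<phi> y \<Longrightarrow> ldiff i \<psi> y \<Longrightarrow> ldiff i (\<lambda>z. \<phi> z * \<psi> z) y"
  unfolding ldiff_def using field_differentiable_mult[where S=UNIV] by auto

lemma ldiff_add: "ldiff i \<phi> y \<Longrightarrow> ldiff i \<psi> y \<Longrightarrow> ldiff i (\<lambda>z. \<phi> z + \<psi> z) y"
  unfolding ldiff_def using field_differentiable_add by auto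

lemma ldiff_diff: "ldiff i \<phi> y \<Longrightarrow> ldiff i \<psi> y \<Longrightarrow> ldiff i (\<lambda>z. \<phi> z - \<psi> z) y"
  unfolding ldiff_def using field_differentiable_diff by auto

lemma ldiff_sum: "(\<And>b. b \<in> I \<Longrightarrow> ldiff i (\<phi> b) y) \<Longrightarrow> ldiff i (\<lambda>z. \<Sum>b\<in>I. \<phi> b z) y"
  unfolding ldiff_def by (rule field_differentiable_sum) auto

lemma holo_ldiff: "holo V f \<Longrightarrow> y \<in> V \<Longrightarrow> ldiff i f y"
  unfolding ldiff_def field_differentiable_def using holo_line[of V f y 0 "axis i 1"] by auto

lemma mixed:
  assumes "holo V f" "open V" "y \<in> V"
  shows "ldiff i (pd j f) y" "pd i (pd j f) y = pd j (pd i f) y"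
proof -
  obtain K where K1: "((\<lambda>t. pd j f (y + t *s axis i 1)) has_field_derivative K) (at 0)"
      and K2: "((\<lambda>t. pd i f (y + t *s axis j 1)) has_field_derivative K) (at 0)"
    using holo_mixed[OF assms, of j i] by blast
  show "ldiff i (pd j f) y" unfolding ldiff_def field_differentiable_def using K1 by blast
  show "pd i (pd j f) y = pd j (pd i f) y"
    unfolding pd_def[of i "pd j f"] pd_def[of j "pd i f"]
    using DERIV_imp_deriv[OF K1] DERIV_imp_deriv[OF K2] by simp
qed

lemma mabs_madd1: "mabs (madd1 L k) = Suc (mabs L)"
proof -
  have "mabs (madd1 L k) = (madd1 L k) k + sum (madd1 L k) (UNIV - {k})"
    unfolding mabs_def by (rule sum.remove) auto
  also have "sum (madd1 L k) (UNIV - {k}) = sum L (UNIV - {k})"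
    by (rule sum.cong) (auto simp: madd1_def)
  also have "sum L (UNIV - {k}) = mabs L - L k"
    unfolding mabs_def using sum.remove[of UNIV k L] by simp
  finally show ?thesis
    using member_le_sum[of k UNIV L] by (simp add: madd1_def mabs_def)
qed

lemma madd1_comm: "madd1 (madd1 L j) i = madd1 (madd1 L i) j"
  by (auto simp: madd1_def fun_eq_iff)

lemma finite_low: "finite {L :: 'n::finite \<Rightarrow> nat. mabs L \<le> m}"
proof (rule finite_subset)
  show "{L :: 'n \<Rightarrow> nat. mabs L \<le> m} \<subseteq> PiE UNIV (\<lambda>_. {..m})"
  proof
    fix L :: "'n \<Rightarrow> nat" assume "L \<in> {L. mabs L \<le> m}"
    then have "L k \<le> m" for k using member_le_sum[of k UNIV L] by (simp add: mabs_def)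
    then show "L \<in> PiE UNIV (\<lambda>_. {..m})" by (simp add: PiE_UNIV_domain)
  qed
  show "finite (PiE UNIV (\<lambda>_::'n. {..m}))" by (rule finite_PiE) auto
qed

lemma curv_alg:
  fixes fb gb hb Di Dj pio pjo :: "nat \<Rightarrow> complex" and oi oj :: "nat \<Rightarrow> nat \<Rightarrow> complex"
    and l P P' :: complex
  assumes SN: "S0 \<le> N"
    and Hf: "\<And>b. S0 \<le> b \<Longrightarrow> b < N \<Longrightarrow> fb b = 0 \<and> Di b = 0 \<and> Dj b = 0"
    and HDi: "\<And>c. c < N \<Longrightarrow> Di c = gb c + (\<Sum>e<N. oi c e * fb e)"
    and HDj: "\<And>c. c < N \<Longrightarrow> Dj c = hb c + (\<Sum>e<N. oj c e * fb e)"
    and HP: "P = (l + (\<Sum>b<N. oi a b * hb b)) + (\<Sum>b<S0. pio b * fb b + oj a b * Di b)"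
    and HP': "P' = (l + (\<Sum>b<N. oj a b * gb b)) + (\<Sum>b<S0. pjo b * fb b + oi a b * Dj b)"
    and eq: "P = P'"
  shows "(\<Sum>b<N. (pio b - pjo b + (\<Sum>c<N. oi c b * oj a c - oj c b * oi a c)) * fb b) = 0"
proof -
  define Q1 where "Q1 = (\<Sum>b<N. \<Sum>e<N. oj a b * oi b e * fb e)"
  define Q2 where "Q2 = (\<Sum>b<N. \<Sum>e<N. oi a b * oj b e * fb e)"
  have ext1: "(\<Sum>b<S0. pio b * fb b + oj a b * Di b) = (\<Sum>b<N. pio b * fb b + oj a b * Di b)"
    by (rule sum.mono_neutral_left) (use SN Hf in auto)
  have ext2: "(\<Sum>b<S0. pjo b * fb b + oi a b * Dj b) = (\<Sum>b<N. pjo b * fb b + oi a b * Dj b)"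
    by (rule sum.mono_neutral_left) (use SN Hf in auto)
  have d1: "(\<Sum>b<N. oj a b * Di b) = (\<Sum>b<N. oj a b * gb b) + Q1"
  proof -
    have "(\<Sum>b<N. oj a b * Di b) = (\<Sum>b<N. oj a b * gb b + (\<Sum>e<N. oj a b * oi b e * fb e))"
      by (rule sum.cong[OF refl]) (simp add: HDi distrib_left sum_distrib_left mult.assoc)
    then show ?thesis by (simp add: sum.distrib Q1_def)
  qed
  have d2: "(\<Sum>b<N. oi a b * Dj b) = (\<Sum>b<N. oi a b * hb b) + Q2"
  proof -
    have "(\<Sum>b<N. oi a b * Dj b) = (\<Sum>b<N. oi a b * hb b + (\<Sum>e<N. oi a b * oj b e * fb e))"
      by (rule sum.cong[OF refl]) (simp add: HDj distrib_left sum_distrib_left mult.assoc)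
    then show ?thesis by (simp add: sum.distrib Q2_def)
  qed
  have P1: "P = l + (\<Sum>b<N. oi a b * hb b) + (\<Sum>b<N. pio b * fb b) + (\<Sum>b<N. oj a b * gb b) + Q1"
    using HP ext1 d1 by (simp add: sum.distrib)
  have P2: "P' = l + (\<Sum>b<N. oj a b * gb b) + (\<Sum>b<N. pjo b * fb b) + (\<Sum>b<N. oi a b * hb b) + Q2"
    using HP' ext2 d2 by (simp add: sum.distrib)
  have T: "(\<Sum>b<N. (pio b - pjo b + (\<Sum>c<N. oi c b * oj a c - oj c b * oi a c)) * fb b)
       = (\<Sum>b<N. pio b * fb b) - (\<Sum>b<N. pjo b * fb b) + Q1 - Q2"
  proof -
    have "(\<Sum>b<N. (pio b - pjo b + (\<Sum>c<N. oi c b * oj a c - oj c b * oi a c)) * fb b)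
       = (\<Sum>b<N. pio b * fb b) - (\<Sum>b<N. pjo b * fb b)
         + (\<Sum>b<N. \<Sum>c<N. oi c b * oj a c * fb b) - (\<Sum>b<N. \<Sum>c<N. oj c b * oi a c * fb b)"
      by (simp add: algebra_simps sum.distrib sum_subtractf sum_distrib_right sum_distrib_left)
    also have "(\<Sum>b<N. \<Sum>c<N. oi c b * oj a c * fb b) = Q1"
      unfolding Q1_def by (subst sum.swap) (simp add: mult_ac)
    also have "(\<Sum>b<N. \<Sum>c<N. oj c b * oi a c * fb b) = Q2"
      unfolding Q2_def by (subst sum.swap) (simp add: mult_ac)
    finally show ?thesis .
  qed
  have "P - P' = (\<Sum>b<N. pio b * fb b) - (\<Sum>b<N. pjo b * fb b) + Q1 - Q2"
    using P1 P2 by (simp add: algebra_simps)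
  with T eq show ?thesis by simp
qed



lemma cnh_choose: "m \<ge> 1 \<Longrightarrow> cnh m h = (m - 1 + h) choose h"
proof -
  have "fact h * fact (m - 1 + h - h) * ((m - 1 + h) choose h) = (fact (m - 1 + h) :: nat)"
    by (rule binomial_fact_lemma) simp
  then have "fact (m - 1 + h) = (fact (m - 1) * fact h) * ((m - 1 + h) choose h :: nat)" by (simp add: mult_ac)
  then show ?thesis unfolding cnh_def by simp
qed

lemma cnh_pascal:
  assumes "n \<ge> 2" "k0 \<ge> 1"
  shows "cnh n k0 = cnh n (k0 - 1) + cnh (n - 1) k0"
proof -
  define n' where "n' = n - 2"
  define k' where "k' = k0 - 1"
  have nk: "n = Suc (Suc n')" "k0 = Suc k'" using assms unfolding n'_def k'_def by arith+
  have "cnh n k0 = (Suc (Suc n' + k')) choose (Suc k')" unfolding nk by (subst cnh_choose) simp_all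
  also have "\<dots> = ((Suc n' + k') choose k') + ((Suc n' + k') choose (Suc k'))" by (rule binomial_Suc_Suc)
  also have "(Suc n' + k') choose k' = cnh n (k0 - 1)" unfolding nk by (subst cnh_choose) simp_all
  also have "(Suc n' + k') choose (Suc k') = cnh (n - 1) k0" unfolding nk by (subst cnh_choose) simp_all
  finally show ?thesis .
qed

locale web =
  fixes X V :: "(complex^'n::finite) set"
    and w :: "nat \<Rightarrow> 'n \<Rightarrow> complex^'n \<Rightarrow> complex"
    and d k0 N :: nat
    and \<sigma> :: "nat \<Rightarrow> complex^'n \<Rightarrow> 'n jet"
    and om :: "nat \<Rightarrow> nat \<Rightarrow> 'n \<Rightarrow> complex^'n \<Rightarrow> complex"
  assumes n2: "CARD('n) \<ge> 2"
    and X_open: "open X"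
    and w_holo: "\<forall>i<d. \<forall>j. holo X (w i j)"
    and w_nonvan: "\<forall>i<d. \<forall>x\<in>X. \<exists>j. w i j x \<noteq> 0"
    and w_integrable: "\<forall>i<d. \<forall>x\<in>X. integrable_form (w i) x"
    and k0: "k0 \<ge> 2"
    and calibrated: "d = cnh CARD('n) k0"
    and ord_rank: "\<forall>k. k \<le> k0 - 2 \<longrightarrow>
                     is_hvb X (Rk w d k) (\<Sum>h=1..k+1. d - cnh CARD('n) h)"
    and N_def: "N = (\<Sum>h=1..k0-1. d - cnh CARD('n) h)"
    and ord_iso_hvb: "is_hvb X (Rk w d (k0 - 1)) N"
    and ord_iso: "\<forall>x\<in>X. bij_betw (trunc (k0 - 2)) (Rk w d (k0 - 1) x) (Rk w d (k0 - 2) x)"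
    and V_open: "open V" and V_sub: "V \<subseteq> X"
    and triv_holo: "\<forall>a<N. holo_sec V (\<sigma> a)"
    and triv_basis: "\<forall>y\<in>V. is_basis (Rk w d (k0 - 2) y) N (\<lambda>a. \<sigma> a y)"
    and adapted: "\<forall>h. 1 \<le> h \<and> h \<le> k0 - 2 \<longrightarrow> (\<forall>y\<in>V.
        is_compl (Ffilt w d k0 h y) (Ffilt w d k0 (h + 1) y)
          {a. (\<Sum>k=1..h. d - cnh CARD('n) k) \<le> a \<and> a < (\<Sum>k=1..h+1. d - cnh CARD('n) k)}
          (\<lambda>a. \<sigma> a y))"
    and conn_forms: "\<forall>a<N. \<forall>i. \<forall>y\<in>V.
        nabla w d k0 i (\<sigma> a) y = lincomb {..<N} (\<lambda>b. om a b i y) (\<lambda>b. \<sigma> b y)"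
begin

definition S0 where "S0 = (\<Sum>k=1..k0-2. d - cnh CARD('n) k)"

lemma S0_eq: "N - cnh (CARD('n) - 1) k0 = S0" "S0 \<le> N"
proof -
  have k: "k0 - 1 = Suc (k0 - 2)" using k0 by simp
  have "N = S0 + (d - cnh CARD('n) (k0 - 1))"
    unfolding N_def S0_def k by simp
  moreover have "d - cnh CARD('n) (k0 - 1) = cnh (CARD('n) - 1) k0"
    using cnh_pascal[of "CARD('n)" k0] n2 k0 calibrated by simp
  ultimately show "N - cnh (CARD('n) - 1) k0 = S0" "S0 \<le> N" by simp_all
qed

lemma S0_pos: "0 < S0 \<Longrightarrow> k0 \<ge> 3"
  using k0 unfolding S0_def by (cases "k0 = 2") auto

lemma lincomb_delta:
  assumes "finite A" "b \<in> A"
  shows "lincomb A (\<lambda>a. if a = b then 1 else 0) v = v b"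
  using assms by (simp add: lincomb_def fun_eq_iff if_distrib[where f="\<lambda>x. x * _"] cong: if_cong)

lemma basis_mem: "b < N \<Longrightarrow> z \<in> V \<Longrightarrow> \<sigma> b z \<in> Rk w d (k0 - 2) z"
  using triv_basis lincomb_delta[of "{..<N}" b "\<lambda>a. \<sigma> a z"] unfolding is_basis_def
  by (metis finite_lessThan lessThan_iff)

lemma Rk_zero: "s \<in> Rk w d k x \<Longrightarrow> d \<le> i \<or> k < mabs L \<Longrightarrow> s i L = 0"
  unfolding Rk_def by blast

lemma zero_Rk: "(\<lambda>i L. 0) \<in> Rk w d k x"
  unfolding Rk_def zeroeq_def firsteq_def by simp

lemma Ffilt_top: "Ffilt w d k0 (k0 - 1) z = {\<lambda>i L. 0}"
proof
  show "Ffilt w d k0 (k0 - 1) z \<subseteq> {\<lambda>i L. 0}"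
  proof
    fix s assume s: "s \<in> Ffilt w d k0 (k0 - 1) z"
    have "s i L = 0" for i L
    proof (cases "mabs L \<le> k0 - 2")
      case True
      have "trunc (k0 - 1 - 1) s i L = 0" using s unfolding Ffilt_def by simp
      then show ?thesis using True by (simp add: trunc_def numeral_2_eq_2)
    next
      case False
      then show ?thesis using s unfolding Ffilt_def by (auto intro: Rk_zero)
    qed
    then show "s \<in> {\<lambda>i L. 0}" by auto
  qed
  show "{\<lambda>i L. 0} \<subseteq> Ffilt w d k0 (k0 - 1) z"
    using zero_Rk by (auto simp: Ffilt_def trunc_def fun_eq_iff)
qed

lemma blockA: "k0 \<ge> 3 \<Longrightarrow> {a. (\<Sum>k=1..k0-2. d - cnh CARD('n) k) \<le> a \<and> a < (\<Sum>k=1..k0-2+1. d - cnh CARD('n) k)}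
   = {a. S0 \<le> a \<and> a < N}"
proof -
  assume "k0 \<ge> 3"
  then have "k0 - 2 + 1 = k0 - 1" by simp
  then show ?thesis unfolding S0_def N_def by simp
qed

lemma compl_top: "k0 \<ge> 3 \<Longrightarrow> y \<in> V \<Longrightarrow>
   is_compl (Ffilt w d k0 (k0 - 2) y) {\<lambda>i L. 0} {a. S0 \<le> a \<and> a < N} (\<lambda>a. \<sigma> a y)"
proof -
  assume k: "k0 \<ge> 3" and y: "y \<in> V"
  have e: "k0 - 2 + 1 = k0 - 1" using k by simp
  have h: "1 \<le> k0 - 2 \<and> k0 - 2 \<le> k0 - 2" using k by simp
  have "is_compl (Ffilt w d k0 (k0 - 2) y) (Ffilt w d k0 (k0 - 2 + 1) y)
          {a. (\<Sum>k=1..k0 - 2. d - cnh CARD('n) k) \<le> a \<and> a < (\<Sum>k=1..k0 - 2 + 1. d - cnh CARD('n) k)}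
          (\<lambda>a. \<sigma> a y)"
    using adapted h y by blast
  then show ?thesis by (simp only: e Ffilt_top S0_def[symmetric] N_def[symmetric])
qed

lemma last_block:
  assumes k: "k0 \<ge> 3" and z: "z \<in> V" and b: "S0 \<le> b" "b < N"
  shows "\<sigma> b z \<in> Ffilt w d k0 (k0 - 2) z"
proof -
  have "lincomb {a. S0 \<le> a \<and> a < N} (\<lambda>a. if a = b then 1 else 0) (\<lambda>a. \<sigma> a z) = \<sigma> b z"
    by (rule lincomb_delta) (use b in auto)
  then have "\<sigma> b z = (\<lambda>i L. lincomb {a. S0 \<le> a \<and> a < N} (\<lambda>a. if a = b then 1 else 0) (\<lambda>a. \<sigma> a z) i L + 0)"
    by simp
  then show ?thesis using compl_top[OF k z] unfolding is_compl_def by blast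
qed

lemma low_zero:
  assumes k: "k0 \<ge> 3" and z: "z \<in> V" and b: "S0 \<le> b" "b < N" and L: "mabs L \<le> k0 - 3"
  shows "\<sigma> b z i' L = 0"
proof -
  have "trunc (k0 - 2 - 1) (\<sigma> b z) i' L = 0"
    using last_block[OF k z b] unfolding Ffilt_def by simp
  moreover have "k0 - 2 - 1 = k0 - 3" by simp
  ultimately show ?thesis using L by (simp add: trunc_def)
qed

lemma lincomb_diff: "lincomb A (\<lambda>b. e b - c b) v = (\<lambda>i L. lincomb A e v i L - lincomb A c v i L)"
  by (simp add: lincomb_def fun_eq_iff left_diff_distrib sum_subtractf)

lemma F_last:
  assumes k: "k0 \<ge> 3" and y: "y \<in> V"
    and T: "lincomb {..<N} e (\<lambda>b. \<sigma> b y) \<in> Ffilt w d k0 (k0 - 2) y"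
    and b: "b < S0"
  shows "e b = 0"
proof -
  let ?A = "{a. S0 \<le> a \<and> a < N}"
  obtain c t where t: "t \<in> {\<lambda>i L. 0}"
    and eq: "lincomb {..<N} e (\<lambda>b. \<sigma> b y) = (\<lambda>i L. lincomb ?A c (\<lambda>a. \<sigma> a y) i L + t i L)"
    using compl_top[OF k y] T unfolding is_compl_def by blast
  define c' where "c' a = (if a \<in> ?A then c a else 0)" for a
  have "lincomb ?A c (\<lambda>a. \<sigma> a y) = lincomb {..<N} c' (\<lambda>a. \<sigma> a y)"
    unfolding lincomb_def c'_def fun_eq_iff
    by (auto intro!: sum.mono_neutral_cong_left split: if_splits)
  then have "lincomb {..<N} (\<lambda>a. e a - c' a) (\<lambda>a. \<sigma> a y) = (\<lambda>i L. 0)"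
    using eq t unfolding lincomb_diff by (simp add: fun_eq_iff)
  then have "\<forall>a<N. e a - c' a = 0" using triv_basis y unfolding is_basis_def by blast
  moreover have "b < N" using b S0_eq(2) by simp
  ultimately show ?thesis using b by (simp add: c'_def)
qed

lemma lift_trunc:
  assumes z: "z \<in> V" and s: "s \<in> Rk w d (k0 - 2) z"
  shows "trunc (k0 - 2) (lift w d k0 z s) = s"
proof -
  have zX: "z \<in> X" using z V_sub by auto
  have bij: "bij_betw (trunc (k0 - 2)) (Rk w d (k0 - 1) z) (Rk w d (k0 - 2) z)"
    using ord_iso zX by blast
  then have "s \<in> trunc (k0 - 2) ` Rk w d (k0 - 1) z" using s unfolding bij_betw_def by simp
  then obtain t where t: "t \<in> Rk w d (k0 - 1) z" "trunc (k0 - 2) t = s"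
    by blast
  have "\<exists>!t. t \<in> Rk w d (k0 - 1) z \<and> trunc (k0 - 2) t = s"
    using t bij unfolding bij_betw_def inj_on_def by blast
  from theI'[OF this] show ?thesis unfolding lift_def by blast
qed

lemma conn_entry:
  assumes a: "a < N" and z: "z \<in> V" and i': "i' < d" and L: "mabs L \<le> k0 - 2"
  shows "pd k (\<lambda>z. \<sigma> a z i' L) z - lift w d k0 z (\<sigma> a z) i' (madd1 L k)
       = (\<Sum>b<N. om a b k z * \<sigma> b z i' L)"
proof -
  have "nabla w d k0 k (\<sigma> a) z i' L = lincomb {..<N} (\<lambda>b. om a b k z) (\<lambda>b. \<sigma> b z) i' L"
    using conn_forms a z by simp
  then show ?thesis using i' L by (simp add: nabla_def lincomb_def)
qed

lemma E_full:
  assumes a: "a < N" and z: "z \<in> V" and i': "i' < d" and L: "mabs L \<le> k0 - 3" and k: "k0 \<ge> 3"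
  shows "pd k (\<lambda>z. \<sigma> a z i' L) z = \<sigma> a z i' (madd1 L k) + (\<Sum>b<N. om a b k z * \<sigma> b z i' L)"
proof -
  have L2: "mabs L \<le> k0 - 2" using L by simp
  have "lift w d k0 z (\<sigma> a z) i' (madd1 L k) = trunc (k0 - 2) (lift w d k0 z (\<sigma> a z)) i' (madd1 L k)"
    using L k by (simp add: trunc_def mabs_madd1)
  also have "\<dots> = \<sigma> a z i' (madd1 L k)"
    using lift_trunc[OF z basis_mem[OF a z]] by simp
  finally show ?thesis using conn_entry[OF a z i' L2, of k] by (simp add: algebra_simps)
qed

lemma E_low:
  assumes a: "a < N" and z: "z \<in> V" and i': "i' < d" and L: "mabs L \<le> k0 - 3" and k: "k0 \<ge> 3"
  shows "pd k (\<lambda>z. \<sigma> a z i' L) z = \<sigma> a z i' (madd1 L k) + (\<Sum>b<S0. om a b k z * \<sigma> b z i' L)"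
proof -
  have "(\<Sum>b<S0. om a b k z * \<sigma> b z i' L) = (\<Sum>b<N. om a b k z * \<sigma> b z i' L)"
    by (rule sum.mono_neutral_left) (use S0_eq(2) low_zero[OF k z _ _ L] in auto)
  then show ?thesis using E_full[OF assms] by simp
qed


lemma hol: "b < N \<Longrightarrow> holo V (\<lambda>z. \<sigma> b z i' L)"
  using triv_holo unfolding holo_sec_def by blast

lemma in_Ffilt:
  assumes y: "y \<in> V" and k3: "k0 \<ge> 3"
    and H: "\<And>i' L. i' < d \<Longrightarrow> mabs L \<le> k0 - 3 \<Longrightarrow> lincomb {..<N} e (\<lambda>b. \<sigma> b y) i' L = 0"
  shows "lincomb {..<N} e (\<lambda>b. \<sigma> b y) \<in> Ffilt w d k0 (k0 - 2) y"
proof -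
  let ?T = "lincomb {..<N} e (\<lambda>b. \<sigma> b y)"
  have R: "?T \<in> Rk w d (k0 - 2) y" using triv_basis y unfolding is_basis_def by blast
  have "trunc (k0 - 2 - 1) ?T = (\<lambda>i L. 0)"
  proof (intro ext)
    fix i' L
    have e3: "k0 - 2 - 1 = k0 - 3" by simp
    show "trunc (k0 - 2 - 1) ?T i' L = 0"
      unfolding e3 trunc_def using H[of i' L] Rk_zero[OF R, of i' L] by (cases "i' < d") (auto simp: not_less)
  qed
  then show ?thesis using R unfolding Ffilt_def by simp
qed

lemma om_ldiff:
  assumes k3: "k0 \<ge> 3" and a: "a < N" and b: "b < S0" and y: "y \<in> V"
  shows "ldiff l (om a b k) y"
proof -
  define P where "P = {p :: nat \<times> ('n \<Rightarrow> nat). fst p < d \<and> mabs (snd p) \<le> k0 - 3}"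
  have finP: "finite P"
    by (rule finite_subset[of _ "{..<d} \<times> {L. mabs L \<le> k0 - 3}"]) (auto simp: P_def finite_low)
  define A where "A p b t = \<sigma> b (y + t *s axis l 1) (fst p) (snd p)" for p b t
  define v where "v p t = pd k (\<lambda>z. \<sigma> a z (fst p) (snd p)) (y + t *s axis l 1)
      - \<sigma> a (y + t *s axis l 1) (fst p) (madd1 (snd p) k)" for p t
  define c where "c b t = om a b k (y + t *s axis l 1)" for b t
  have SN: "S0 \<le> N" by (rule S0_eq(2))
  have "c b field_differentiable (at 0)"
  proof (rule coeff_fd[OF finP, of S0 A v c])
    show "A p b' field_differentiable (at 0)" if "p \<in> P" "b' < S0" for p b'
      using holo_ldiff[OF hol y, of b'] that SN unfolding ldiff_def A_def by simp
    show "v p field_differentiable (at 0)" if "p \<in> P" for p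
    proof -
      have "ldiff l (\<lambda>z. pd k (\<lambda>z. \<sigma> a z (fst p) (snd p)) z - \<sigma> a z (fst p) (madd1 (snd p) k)) y"
        by (rule ldiff_diff[OF mixed(1)[OF hol[OF a] V_open y] holo_ldiff[OF hol[OF a] y]])
      then show ?thesis unfolding ldiff_def v_def .
    qed
    show "eventually (\<lambda>t. \<forall>p\<in>P. (\<Sum>b<S0. c b t * A p b t) = v p t) (nhds 0)"
    proof (rule eventually_mono[OF ev_line[OF V_open y, of "axis l 1"]])
      fix t assume z: "y + t *s axis l 1 \<in> V"
      show "\<forall>p\<in>P. (\<Sum>b<S0. c b t * A p b t) = v p t"
      proof
        fix p assume p: "p \<in> P"
        show "(\<Sum>b<S0. c b t * A p b t) = v p t"
          using E_low[OF a z _ _ k3, of "fst p" "snd p" k] p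
          unfolding c_def A_def v_def P_def by simp
      qed
    qed
    show "\<forall>b<S0. e b = 0" if H: "\<forall>p\<in>P. (\<Sum>b<S0. e b * A p b 0) = 0" for e
    proof -
      define e' where "e' b = (if b < S0 then e b else 0)" for b
      have "lincomb {..<N} e' (\<lambda>b. \<sigma> b y) \<in> Ffilt w d k0 (k0 - 2) y"
      proof (rule in_Ffilt[OF y k3])
        fix i' and L :: "'n \<Rightarrow> nat" assume i': "i' < d" and L: "mabs L \<le> k0 - 3"
        have "lincomb {..<N} e' (\<lambda>b. \<sigma> b y) i' L = (\<Sum>b<S0. e b * \<sigma> b y i' L)"
          unfolding lincomb_def e'_def by (rule sum.mono_neutral_cong_right) (use SN in auto)
        also have "\<dots> = 0" using H i' L by (auto simp: P_def A_def)
        finally show "lincomb {..<N} e' (\<lambda>b. \<sigma> b y) i' L = 0" .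
      qed
      from F_last[OF k3 y this] show ?thesis by (auto simp: e'_def)
    qed
    show "b < S0" by (rule b)
  qed
  then show ?thesis unfolding ldiff_def c_def .
qed


lemma key:
  assumes k3: "k0 \<ge> 3" and a: "a < N" and y: "y \<in> V" and i': "i' < d" and L: "mabs L \<le> k0 - 3"
  shows "(\<Sum>b<N. curv N om a b i j y * \<sigma> b y i' L) = 0"
proof -
  define f where "f b = (\<lambda>z. \<sigma> b z i' L)" for b
  have SN: "S0 \<le> N" by (rule S0_eq(2))
  have Lm: "mabs (madd1 L m) \<le> k0 - 2" for m using L k3 by (simp add: mabs_madd1)
  have ldf: "ldiff m (f b) y" if "b < N" for m b unfolding f_def by (rule holo_ldiff[OF hol[OF that] y])
  have Pgen: "pd m (pd m' (f a)) y =
     (lift w d k0 y (\<sigma> a y) i' (madd1 (madd1 L m') m) + (\<Sum>b<N. om a b m y * \<sigma> b y i' (madd1 L m')))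
     + (\<Sum>b<S0. pd m (om a b m') y * \<sigma> b y i' L + om a b m' y * pd m (f b) y)" for m m'
  proof -
    have ld1: "ldiff m (\<lambda>z. \<sigma> a z i' (madd1 L m')) y" by (rule holo_ldiff[OF hol[OF a] y])
    have ldo: "ldiff m (om a b m') y" if "b < S0" for b by (rule om_ldiff[OF k3 a that y])
    have ldfb: "ldiff m (f b) y" if "b < S0" for b using that SN ldf by simp
    have ldt: "ldiff m (\<lambda>z. om a b m' z * f b z) y" if "b \<in> {..<S0}" for b
      using that by (simp add: ldiff_mult ldo ldfb)
    have ld2: "ldiff m (\<lambda>z. \<Sum>b<S0. om a b m' z * f b z) y" by (rule ldiff_sum) (rule ldt)
    have "pd m (pd m' (f a)) y = pd m (\<lambda>z. \<sigma> a z i' (madd1 L m') + (\<Sum>b<S0. om a b m' z * f b z)) y"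
      by (rule pd_cong[OF V_open y]) (simp add: f_def E_low[OF a _ i' L k3])
    also have "\<dots> = pd m (\<lambda>z. \<sigma> a z i' (madd1 L m')) y + pd m (\<lambda>z. \<Sum>b<S0. om a b m' z * f b z) y"
      by (rule pd_add[OF ld1 ld2])
    also have "pd m (\<lambda>z. \<Sum>b<S0. om a b m' z * f b z) y = (\<Sum>b<S0. pd m (\<lambda>z. om a b m' z * f b z) y)"
      by (rule pd_sum) (rule ldt)
    also have "\<dots> = (\<Sum>b<S0. pd m (om a b m') y * \<sigma> b y i' L + om a b m' y * pd m (f b) y)"
    proof (rule sum.cong[OF refl])
      fix b assume "b \<in> {..<S0}"
      then have b: "b < S0" by simp
      show "pd m (\<lambda>z. om a b m' z * f b z) y = pd m (om a b m') y * \<sigma> b y i' L + om a b m' y * pd m (f b) y"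
        by (subst pd_mult[OF ldo[OF b] ldfb[OF b]]) (simp add: f_def)
    qed
    also have "pd m (\<lambda>z. \<sigma> a z i' (madd1 L m')) y
        = lift w d k0 y (\<sigma> a y) i' (madd1 (madd1 L m') m) + (\<Sum>b<N. om a b m y * \<sigma> b y i' (madd1 L m'))"
      using conn_entry[OF a y i' Lm[of m'], of m] by (simp add: algebra_simps)
    finally show ?thesis .
  qed
  have Hf: "\<sigma> b y i' L = 0 \<and> pd i (f b) y = 0 \<and> pd j (f b) y = 0" if "S0 \<le> b" "b < N" for b
  proof -
    have z: "\<And>z. z \<in> V \<Longrightarrow> f b z = 0" unfolding f_def by (rule low_zero[OF k3 _ that L])
    show ?thesis using low_zero[OF k3 y that L] pd_zero[OF V_open y z] by simp
  qed
  have HD: "pd m (f c) y = \<sigma> c y i' (madd1 L m) + (\<Sum>e<N. om c e m y * \<sigma> e y i' L)" if "c < N" for c m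
    unfolding f_def by (rule E_full[OF that y i' L k3])
  have eq: "pd i (pd j (f a)) y = pd j (pd i (f a)) y"
    unfolding f_def by (rule mixed(2)[OF hol[OF a] V_open y])
  have lift_eq: "lift w d k0 y (\<sigma> a y) i' (madd1 (madd1 L i) j) = lift w d k0 y (\<sigma> a y) i' (madd1 (madd1 L j) i)"
    by (simp add: madd1_comm)
  have "(\<Sum>b<N. (pd i (om a b j) y - pd j (om a b i) y
      + (\<Sum>c<N. om c b i y * om a c j y - om c b j y * om a c i y)) * \<sigma> b y i' L) = 0"
  proof (rule curv_alg[where fb="\<lambda>b. \<sigma> b y i' L" and gb="\<lambda>b. \<sigma> b y i' (madd1 L i)"
        and hb="\<lambda>b. \<sigma> b y i' (madd1 L j)" and Di="\<lambda>b. pd i (f b) y" and Dj="\<lambda>b. pd j (f b) y"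
        and oi="\<lambda>c e. om c e i y" and oj="\<lambda>c e. om c e j y"
        and l="lift w d k0 y (\<sigma> a y) i' (madd1 (madd1 L j) i)"
        and P="pd i (pd j (f a)) y" and P'="pd j (pd i (f a)) y"])
    show "S0 \<le> N" by (rule SN)
    show "\<And>b. S0 \<le> b \<Longrightarrow> b < N \<Longrightarrow> \<sigma> b y i' L = 0 \<and> pd i (f b) y = 0 \<and> pd j (f b) y = 0"
      by (rule Hf)
    show "\<And>c. c < N \<Longrightarrow> pd i (f c) y = \<sigma> c y i' (madd1 L i) + (\<Sum>e<N. om c e i y * \<sigma> e y i' L)"
      by (rule HD)
    show "\<And>c. c < N \<Longrightarrow> pd j (f c) y = \<sigma> c y i' (madd1 L j) + (\<Sum>e<N. om c e j y * \<sigma> e y i' L)"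
      by (rule HD)
    show "pd i (pd j (f a)) y = (lift w d k0 y (\<sigma> a y) i' (madd1 (madd1 L j) i)
        + (\<Sum>b<N. om a b i y * \<sigma> b y i' (madd1 L j)))
        + (\<Sum>b<S0. pd i (om a b j) y * \<sigma> b y i' L + om a b j y * pd i (f b) y)"
      by (rule Pgen)
    show "pd j (pd i (f a)) y = (lift w d k0 y (\<sigma> a y) i' (madd1 (madd1 L j) i)
        + (\<Sum>b<N. om a b j y * \<sigma> b y i' (madd1 L i)))
        + (\<Sum>b<S0. pd j (om a b i) y * \<sigma> b y i' L + om a b i y * pd j (f b) y)"
      using Pgen[of j i] lift_eq by simp
    show "pd i (pd j (f a)) y = pd j (pd i (f a)) y" by (rule eq)
  qed
  then show ?thesis by (simp add: curv_def)
qed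

lemma final:
  "\<forall>a<N. \<forall>b. b < N - cnh (CARD('n) - 1) k0 \<longrightarrow> (\<forall>i j. \<forall>y\<in>V. curv N om a b i j y = 0)"
proof (intro allI impI ballI)
  fix a b i j y assume a: "a < N" and b: "b < N - cnh (CARD('n) - 1) k0" and y: "y \<in> V"
  have bS: "b < S0" using b S0_eq(1) by simp
  then have k3: "k0 \<ge> 3" using S0_pos by simp
  have "lincomb {..<N} (\<lambda>b. curv N om a b i j y) (\<lambda>b. \<sigma> b y) \<in> Ffilt w d k0 (k0 - 2) y"
    by (rule in_Ffilt[OF y k3]) (simp add: lincomb_def key[OF k3 a y])
  from F_last[OF k3 y this bS] show "curv N om a b i j y = 0" .
qed

end


theorem theorem4:
  fixes X V :: "(complex^'n::finite) set"
    and w :: "nat \<Rightarrow> 'n \<Rightarrow> complex^'n \<Rightarrow> complex"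
    and d k0 N :: nat
    and \<sigma> :: "nat \<Rightarrow> complex^'n \<Rightarrow> 'n jet"
    and om :: "nat \<Rightarrow> nat \<Rightarrow> 'n \<Rightarrow> complex^'n \<Rightarrow> complex"
  assumes n2: "CARD('n) \<ge> 2"
    and X_open: "open X"
    and w_holo: "\<forall>i<d. \<forall>j. holo X (w i j)"
    and w_nonvan: "\<forall>i<d. \<forall>x\<in>X. \<exists>j. w i j x \<noteq> 0"
    and w_integrable: "\<forall>i<d. \<forall>x\<in>X. integrable_form (w i) x"
    and k0: "k0 \<ge> 2"
    and calibrated: "d = cnh CARD('n) k0"
    and ord_rank: "\<forall>k. k \<le> k0 - 2 \<longrightarrow>
                     is_hvb X (Rk w d k) (\<Sum>h=1..k+1. d - cnh CARD('n) h)"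
    and N_def: "N = (\<Sum>h=1..k0-1. d - cnh CARD('n) h)"
    and ord_iso_hvb: "is_hvb X (Rk w d (k0 - 1)) N"
    and ord_iso: "\<forall>x\<in>X. bij_betw (trunc (k0 - 2)) (Rk w d (k0 - 1) x) (Rk w d (k0 - 2) x)"
    and V_open: "open V" and V_sub: "V \<subseteq> X"
    and triv_holo: "\<forall>a<N. holo_sec V (\<sigma> a)"
    and triv_basis: "\<forall>y\<in>V. is_basis (Rk w d (k0 - 2) y) N (\<lambda>a. \<sigma> a y)"
    and adapted: "\<forall>h. 1 \<le> h \<and> h \<le> k0 - 2 \<longrightarrow> (\<forall>y\<in>V.
        is_compl (Ffilt w d k0 h y) (Ffilt w d k0 (h + 1) y)
          {a. (\<Sum>k=1..h. d - cnh CARD('n) k) \<le> a \<and> a < (\<Sum>k=1..h+1. d - cnh CARD('n) k)}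
          (\<lambda>a. \<sigma> a y))"
    and conn_forms: "\<forall>a<N. \<forall>i. \<forall>y\<in>V.
        nabla w d k0 i (\<sigma> a) y = lincomb {..<N} (\<lambda>b. om a b i y) (\<lambda>b. \<sigma> b y)"
  shows "\<forall>a<N. \<forall>b. b < N - cnh (CARD('n) - 1) k0 \<longrightarrow>
           (\<forall>i j. \<forall>y\<in>V. curv N om a b i j y = 0)"
  proof -
  interpret web X V w d k0 N \<sigma> om
    by (rule web.intro) (rule assms)+
  show ?thesis by (rule final)
qed

end
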